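(* Let $p$ be a prime number and let $x,y,z\in\mathbb{N}$ with $x\le y\le z$ satisfy $\frac{4}{p}=\frac{1}{x}+\frac{1}{y}+\frac{1}{z}$. Let $d=\gcd(x,y,z)$, $a=\gcd(x,y)/d$, $b=\gcd(x,z)/d$, $c=\gcd(y,z)/d$, and let $x^{\circ},y^{\circ},z^{\circ}$ be the positive integers with $x=x^{\circ}abd$, $y=y^{\circ}acd$, $z=z^{\circ}bcd$. (i) If the solution is of Type I, i.e. $\gcd(x,p)=1$, $\gcd(y,p)=1$ and $\gcd(z,p)=p$, then $x^{\circ}=y^{\circ}=1$ and $z^{\circ}=p$. (ii) If the solution is of Type II, i.e. $\gcd(x,p)=1$, $\gcd(y,p)=p$ and $\gcd(z,p)=p$, then $x^{\circ}=y^{\circ}=z^{\circ}=1$.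
   Context: $\mathbb{N}$ denotes the positive integers. The quantities $x^{\circ},y^{\circ},z^{\circ}$ are well-defined positive integers since $abd\mid x$, $acd\mid y$, $bcd\mid z$ ($a,b,c$ are pairwise coprime). *)

theory Defs
  imports Complex_Main "HOL-Computational_Algebra.Primes"
begin

end

theory Submission
  imports Defs
begin

theorem lemma5:
  fixes p x y z d a b c x0 y0 z0 :: nat
  assumes "prime p"
    and "0 < x" and "x \<le> y" and "y \<le> z"
    and "4 / real p = 1 / real x + 1 / real y + 1 / real z"
    and "d = gcd (gcd x y) z"
    and "a = gcd x y div d" and "b = gcd x z div d" and "c = gcd y z div d"
    and "x = x0 * a * b * d" and "y = y0 * a * c * d" and "z = z0 * b * c * d"
  shows "(gcd x p = 1 \<and> gcd y p = 1 \<and> gcd z p = p \<longrightarrow> x0 = 1 \<and> y0 = 1 \<and> z0 = p)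
       \<and> (gcd x p = 1 \<and> gcd y p = p \<and> gcd z p = p \<longrightarrow> x0 = 1 \<and> y0 = 1 \<and> z0 = 1)"
proof -
  note pr = assms(1)
  have p0: "p > 0" using pr prime_gt_0_nat by blast
  have y0': "y > 0" "z > 0" using assms(2,3,4) by linarith+
  have d0: "d > 0" unfolding assms(6) using y0' by simp
  have "d dvd gcd x y" unfolding assms(6) by (rule gcd_dvd1)
  hence gab: "gcd x y = a * d" using assms(7) by simp
  have "d dvd gcd x z" using assms(6) by (metis gcd.commute gcd_dvd1 gcd_dvd2 gcd_greatest dvd_trans)
  hence gb: "gcd x z = b * d" using assms(8) by simp
  have "d dvd gcd y z" using assms(6) by (metis gcd.assoc gcd_dvd2)
  hence gc: "gcd y z = c * d" using assms(9) by simp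
  have a0: "a > 0" using gab assms(2) by (metis gcd_pos_nat mult_is_0 neq0_conv)
  have b0: "b > 0" using gb assms(2) by (metis gcd_pos_nat mult_is_0 neq0_conv)
  have c0: "c > 0" using gc y0' by (metis gcd_pos_nat mult_is_0 neq0_conv)
  have "gcd x y = (a*d) * gcd (x0*b) (y0*c)"
    proof -
    have "x = (a*d)*(x0*b)" "y = (a*d)*(y0*c)" using assms(10,11) by (simp_all add: ac_simps)
    thus ?thesis by (simp only: gcd_mult_distrib_nat)
  qed
  hence "(a*d) * gcd (x0*b) (y0*c) = (a*d) * 1" using gab by (metis mult_1_right)
  hence "gcd (x0*b) (y0*c) = 1" using a0 d0 by (metis mult_left_cancel nat_0_less_mult_iff less_irrefl)
  hence cop1: "coprime (x0*b) (y0*c)" by (simp only: coprime_iff_gcd_eq_1)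
  have "gcd x z = (b*d) * gcd (x0*a) (z0*c)"
    proof -
    have "x = (b*d)*(x0*a)" "z = (b*d)*(z0*c)" using assms(10,12) by (simp_all add: ac_simps)
    thus ?thesis by (simp only: gcd_mult_distrib_nat)
  qed
  hence "(b*d) * gcd (x0*a) (z0*c) = (b*d) * 1" using gb by (metis mult_1_right)
  hence "gcd (x0*a) (z0*c) = 1" using b0 d0 by (metis mult_left_cancel nat_0_less_mult_iff less_irrefl)
  hence cop2: "coprime (x0*a) (z0*c)" by (simp only: coprime_iff_gcd_eq_1)
  have "gcd y z = (c*d) * gcd (y0*a) (z0*b)"
    proof -
    have "y = (c*d)*(y0*a)" "z = (c*d)*(z0*b)" using assms(11,12) by (simp_all add: ac_simps)
    thus ?thesis by (simp only: gcd_mult_distrib_nat)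
  qed
  hence "(c*d) * gcd (y0*a) (z0*b) = (c*d) * 1" using gc by (metis mult_1_right)
  hence "gcd (y0*a) (z0*b) = 1" using c0 d0 by (metis mult_left_cancel nat_0_less_mult_iff less_irrefl)
  hence cop3: "coprime (y0*a) (z0*b)" by (simp only: coprime_iff_gcd_eq_1)
  have "real (4*x*y*z) = real (p*(x*y+y*z+x*z))"
    using assms(5) p0 assms(2) y0' by (simp add: field_simps)
  hence "4*x*y*z = p*(x*y+y*z+x*z)" by linarith
  hence "(a*b*c*d*d) * (4*x0*y0*z0*a*b*c*d) = (a*b*c*d*d) * (p*(x0*y0*a + y0*z0*c + x0*z0*b))"
    unfolding assms(10,11,12) by (simp add: algebra_simps)
  hence E: "4*x0*y0*z0*a*b*c*d = p*(x0*y0*a + y0*z0*c + x0*z0*b)"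
    using a0 b0 c0 d0 by simp
  have "x0 dvd p*(y0*z0*c)"
  proof -
    have "x0 dvd p*(x0*y0*a + y0*z0*c + x0*z0*b)" unfolding E[symmetric] by (auto intro: dvd_mult dvd_mult2)
    hence "x0 dvd p*(x0*y0*a + x0*z0*b) + p*(y0*z0*c)" by (simp add: algebra_simps)
    moreover have "x0 dvd p*(x0*y0*a + x0*z0*b)" by (simp add: algebra_simps)
    ultimately show ?thesis using dvd_add_right_iff by blast
  qed
  moreover have "coprime x0 (y0*z0*c)" using cop1 cop2 by auto
  ultimately have "x0 dvd p" using coprime_dvd_mult_left_iff by blast
  hence X: "x0 = 1 \<or> x0 = p" using pr prime_nat_iff by blast
  have "y0 dvd p*(x0*z0*b)"
  proof -
    have "y0 dvd p*(x0*y0*a + y0*z0*c + x0*z0*b)" unfolding E[symmetric] by (auto intro: dvd_mult dvd_mult2)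
    hence "y0 dvd p*(x0*y0*a + y0*z0*c) + p*(x0*z0*b)" by (simp add: algebra_simps)
    moreover have "y0 dvd p*(x0*y0*a + y0*z0*c)" by (simp add: algebra_simps)
    ultimately show ?thesis using dvd_add_right_iff by blast
  qed
  moreover have "coprime y0 (x0*z0*b)" using cop1 cop3 by (auto simp: ac_simps)
  ultimately have "y0 dvd p" using coprime_dvd_mult_left_iff by blast
  hence Y: "y0 = 1 \<or> y0 = p" using pr prime_nat_iff by blast
  have "z0 dvd p*(x0*y0*a)"
  proof -
    have "z0 dvd p*(x0*y0*a + y0*z0*c + x0*z0*b)" unfolding E[symmetric] by (auto intro: dvd_mult dvd_mult2)
    hence "z0 dvd p*(y0*z0*c + x0*z0*b) + p*(x0*y0*a)" by (simp add: algebra_simps)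
    moreover have "z0 dvd p*(y0*z0*c + x0*z0*b)" by (simp add: algebra_simps)
    ultimately show ?thesis using dvd_add_right_iff by blast
  qed
  moreover have "coprime z0 (x0*y0*a)" using cop2 cop3 by (auto simp: ac_simps)
  ultimately have "z0 dvd p" using coprime_dvd_mult_left_iff by blast
  hence Z: "z0 = 1 \<or> z0 = p" using pr prime_nat_iff by blast
  have np: "\<not> p dvd x" if "gcd x p = 1" using that pr
    by (metis gcd_nat.absorb2 not_prime_1)
  have pdx: "p dvd x" if "p dvd x0 \<or> p dvd a \<or> p dvd b \<or> p dvd d"
    using that unfolding assms(10) by (auto simp: dvd_mult dvd_mult2)
  have pdy: "p dvd y" if "p dvd y0 \<or> p dvd a \<or> p dvd c \<or> p dvd d"
    using that unfolding assms(11) by (auto simp: dvd_mult dvd_mult2)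
  have pdz: "p dvd y0 \<or> p dvd a \<or> p dvd c \<or> p dvd d" if "p dvd y" using that pr
    unfolding assms(11) by (simp add: prime_dvd_mult_iff)
  have pdz2: "p dvd z0 \<or> p dvd b \<or> p dvd c \<or> p dvd d" if "p dvd z" using that pr
    unfolding assms(12) by (simp add: prime_dvd_mult_iff)
  have I: "x0 = 1 \<and> y0 = 1 \<and> z0 = p" if h: "gcd x p = 1" "gcd y p = 1" "gcd z p = p"
  proof -
    have nx: "\<not> p dvd x" using np h(1) .
    have ny: "\<not> p dvd y" using h(2) pr by (metis gcd_nat.absorb2 not_prime_1)
    have pz: "p dvd z" using h(3) by (metis gcd_dvd1)
    have "x0 = 1" using X nx pdx by auto
    moreover have "y0 = 1" using Y ny pdy by auto
    moreover have "z0 = p" using Z pz pdz2 pdx pdy nx ny by auto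
    ultimately show ?thesis by simp
  qed
  have II: "x0 = 1 \<and> y0 = 1 \<and> z0 = 1" if h: "gcd x p = 1" "gcd y p = p" "gcd z p = p"
  proof -
    have nx: "\<not> p dvd x" using np h(1) .
    have py: "p dvd y" using h(2) by (metis gcd_dvd1)
    have pz: "p dvd z" using h(3) by (metis gcd_dvd1)
    have x1: "x0 = 1" using X nx pdx by auto
    have na: "\<not> p dvd a" "\<not> p dvd b" "\<not> p dvd d" using nx pdx by auto
    have "y0 \<noteq> p \<or> z0 \<noteq> p"
    proof (rule ccontr)
      assume "\<not> (y0 \<noteq> p \<or> z0 \<noteq> p)"
      hence yz: "y0 = p" "z0 = p" by auto
      have "coprime y0 z0" using cop3 by simp
      hence "coprime p p" using yz by simp
      thus False using pr by simp
    qed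
    moreover have "\<not> (y0 = p \<and> z0 = 1)"
    proof
      assume yz: "y0 = p \<and> z0 = 1"
      hence pc: "p dvd c" using pz pdz2 na pr by (auto dest: prime_gt_1_nat)
      have "p * (4*a*b*c*d) = p * (p*a + p*c + b)" using E x1 yz by (simp add: algebra_simps)
      hence "4*a*b*c*d = p*a + p*c + b" using p0 by simp
      hence "p dvd p*a + p*c + b" using pc by (metis dvd_mult dvd_mult2 mult.assoc mult.commute)
      hence "p dvd b" by (simp add: dvd_add_right_iff)
      thus False using na by simp
    qed
    moreover have "\<not> (y0 = 1 \<and> z0 = p)"
    proof
      assume yz: "y0 = 1 \<and> z0 = p"
      hence pc: "p dvd c" using py pdz na pr by (auto dest: prime_gt_1_nat)
      have "p * (4*a*b*c*d) = p * (a + p*c + p*b)" using E x1 yz by (simp add: algebra_simps)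
      hence "4*a*b*c*d = a + p*c + p*b" using p0 by simp
      hence "p dvd a + p*c + p*b" using pc by (metis dvd_mult dvd_mult2 mult.assoc mult.commute)
      hence "p dvd a + (p*c + p*b)" by (simp add: add.assoc)
      moreover have "p dvd p*c + p*b" by simp
      ultimately have "p dvd a" using dvd_add_left_iff by blast
      thus False using na by simp
    qed
    ultimately show ?thesis using x1 Y Z by auto
  qed
  show ?thesis using I II by meson
qed

end
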